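(* Let $\Gamma$ be a countable discrete group acting on a $\sigma$-finite measure space $(\mathcal X,\mu)$ by a quasi-$\Gamma$-invariant measurable action $\sigma$ with Jacobian $J_\sigma$, and let $\Pi_\sigma$ be the unitary representation $\Pi_\sigma(\gamma)\varphi(x)=J_\sigma(\gamma^{-1},x)^{1/2}\varphi(\sigma_{\gamma^{-1}}(x))$ on $L^2(\mathcal X,\mu)$. Suppose $\sigma$ has the tiling property with tiling set $C$. Then the Zak transform $Z_\sigma$, restricted to $x\in C$, defines an isometric isomorphism $Z_\sigma:L^2(\mathcal X,\mu)\to L^2((C,\mu),L^2(\mathcal{R}(\Gamma)))$ satisfying $Z_\sigma[\Pi_\sigma(\gamma)\varphi]=Z_\sigma[\varphi]\rho(\gamma)^*$ for all $\gamma\in\Gamma$, $\varphi\in L^2(\mathcal X,\mu)$. Hence $Z_\sigma$ is a Helson map for $\Pi_\sigma$, and the bracket map of $\Pi_\sigma$ is $[\varphi,\psi]=\int_C Z_\sigma[\psi](x)^*Z_\sigma[\varphi](x)\,d\mu(x)$.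
   Context: $\rho(\gamma)\delta_{\gamma'}=\delta_{\gamma'\gamma^{-1}}$ on $\ell_2(\Gamma)$; $\mathcal{R}(\Gamma)$ is the weak-operator-topology closure of $\mathrm{span}\{\rho(\gamma)\}$, trace $\tau(F)=\langle F\delta_{\mathrm e},\delta_{\mathrm e}\rangle$; $L^p(\mathcal{R}(\Gamma))$ the completion of $\mathrm{span}\{\rho(\gamma)\}$ in $\tau(|F|^p)^{1/p}$. A quasi-$\Gamma$-invariant measurable action: $x\mapsto\sigma_\gamma(x)$ is measurable for each $\gamma$, $\sigma_\gamma\sigma_{\gamma'}=\sigma_{\gamma\gamma'}$ and $\sigma_{\mathrm e}=\mathrm{id}$ a.e., and each measure $E\mapsto\mu(\sigma_\gamma(E))$ is absolutely continuous w.r.t. $\mu$ with positive density $J_\sigma(\gamma,\cdot)$, i.e. $d\mu(\sigma_\gamma(x))=J_\sigma(\gamma,x)d\mu(x)$. Tiling property: there is a measurable $C\subset\mathcal X$ with $\mu(\sigma_{\gamma_1}(C)\cap\sigma_{\gamma_2}(C))=0$ for $\gamma_1\ne\gamma_2$ and $\mu(\mathcal X\setminus\bigcup_\gamma\sigma_\gamma(C))=0$. Zak transform: $Z_\sigma[\varphi](x)=\sum_{\gamma\in\Gamma}(\Pi_\sigma(\gamma)\varphi)(x)\rho(\gamma)$. A Helson map for $(\Gamma,\Pi,\mathcal{H})$ is an isometry $\mathscr T:\mathcal{H}\to L^2((\mathcal{M},\nu),L^2(\mathcal{R}(\Gamma)))$ with $\mathscr T[\Pi(\gamma)\varphi]=\mathscr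 T[\varphi]\rho(\gamma)^*$; the bracket map is the sesquilinear $[\cdot,\cdot]:\mathcal{H}\times\mathcal{H}\to L^1(\mathcal{R}(\Gamma))$ with $\langle\varphi,\Pi(\gamma)\psi\rangle=\tau([\varphi,\psi]\rho(\gamma))$. *)

theory Defs
  imports "HOL-Analysis.Analysis" "HOL-Probability.Probability"
begin

text \<open>Group \<Gamma>: a type of class group_add (not necessarily commutative), written additively:
  group product = +, identity e = 0, inverse = unary minus. Countable discrete: class countable.

  Model of L^2(R(\<Gamma>)): an element F = \<Sum> c(g) rho(g) is represented by its coefficient
  function c :: 'g \<Rightarrow> complex (noncommutative Plancherel), with tau(|F|^2) = \<Sum>|c g|^2.\<close>

definition l2_norm2 :: "('g \<Rightarrow> complex) \<Rightarrow> real" where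
  "l2_norm2 c = (\<Sum>\<^sub>\<infinity> g. (cmod (c g))^2)"

definition in_l2 :: "('g \<Rightarrow> complex) \<Rightarrow> bool" where
  "in_l2 c \<longleftrightarrow> (\<lambda>g. (cmod (c g))^2) summable_on UNIV"

text \<open>F rho(gamma)^*: coefficient at zeta is c(zeta + gamma)\<close>
definition rho_adj_right :: "('g::group_add \<Rightarrow> complex) \<Rightarrow> 'g \<Rightarrow> ('g \<Rightarrow> complex)" where
  "rho_adj_right c \<gamma> = (\<lambda>\<zeta>. c (\<zeta> + \<gamma>))"

text \<open>Coefficients of G^* F (an element of L^1(R(Gamma))).\<close>
definition nc_adj_mult :: "('g::group_add \<Rightarrow> complex) \<Rightarrow> ('g \<Rightarrow> complex) \<Rightarrow> ('g \<Rightarrow> complex)" where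
  "nc_adj_mult G F = (\<lambda>\<alpha>. \<Sum>\<^sub>\<infinity> \<eta>. cnj (G \<eta>) * F (\<eta> + \<alpha>))"

text \<open>tau(F rho(gamma)) for F with coefficient function b\<close>
definition tau_rho :: "('g::group_add \<Rightarrow> complex) \<Rightarrow> 'g \<Rightarrow> complex" where
  "tau_rho b \<gamma> = b (- \<gamma>)"

definition L2_fun :: "'x measure \<Rightarrow> ('x \<Rightarrow> complex) \<Rightarrow> bool" where
  "L2_fun M \<phi> \<longleftrightarrow> \<phi> \<in> borel_measurable M \<and> integrable M (\<lambda>x. (cmod (\<phi> x))^2)"

definition L2_inner :: "'x measure \<Rightarrow> ('x \<Rightarrow> complex) \<Rightarrow> ('x \<Rightarrow> complex) \<Rightarrow> complex" where
  "L2_inner M \<phi> \<psi> = (\<integral>x. \<phi> x * cnj (\<psi> x) \<partial>M)"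

text \<open>Elements of L^2((N), L^2(R(Gamma))) (Gamma countable, so weak = strong measurability).\<close>
definition L2_vec :: "'x measure \<Rightarrow> ('x \<Rightarrow> 'g \<Rightarrow> complex) \<Rightarrow> bool" where
  "L2_vec N F \<longleftrightarrow> (\<forall>g. (\<lambda>x. F x g) \<in> borel_measurable N) \<and> (AE x in N. in_l2 (F x))
     \<and> integrable N (\<lambda>x. l2_norm2 (F x))"

definition quasi_invariant_action ::
  "'x measure \<Rightarrow> ('g::group_add \<Rightarrow> 'x \<Rightarrow> 'x) \<Rightarrow> ('g \<Rightarrow> 'x \<Rightarrow> real) \<Rightarrow> bool" where
  "quasi_invariant_action M \<sigma> J \<longleftrightarrow>
     (\<forall>\<gamma>. \<sigma> \<gamma> \<in> M \<rightarrow>\<^sub>M M) \<and>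
     (\<forall>\<gamma> \<gamma>'. AE x in M. \<sigma> (\<gamma> + \<gamma>') x = \<sigma> \<gamma> (\<sigma> \<gamma>' x)) \<and>
     (AE x in M. \<sigma> 0 x = x) \<and>
     (\<forall>\<gamma>. J \<gamma> \<in> borel_measurable M \<and> (AE x in M. J \<gamma> x > 0) \<and>
        (\<forall>E\<in>sets M. emeasure M (\<sigma> (-\<gamma>) -` E \<inter> space M) = (\<integral>\<^sup>+ x\<in>E. ennreal (J \<gamma> x) \<partial>M)))"

text \<open>sigma_gamma(C) represented (a.e.) as the preimage of C under sigma_{gamma^-1}.\<close>
definition tile :: "'x measure \<Rightarrow> ('g::group_add \<Rightarrow> 'x \<Rightarrow> 'x) \<Rightarrow> 'x set \<Rightarrow> 'g \<Rightarrow> 'x set" where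
  "tile M \<sigma> C \<gamma> = \<sigma> (-\<gamma>) -` C \<inter> space M"

definition tiling_set :: "'x measure \<Rightarrow> ('g::group_add \<Rightarrow> 'x \<Rightarrow> 'x) \<Rightarrow> 'x set \<Rightarrow> bool" where
  "tiling_set M \<sigma> C \<longleftrightarrow> C \<in> sets M \<and>
     (\<forall>\<gamma>1 \<gamma>2. \<gamma>1 \<noteq> \<gamma>2 \<longrightarrow> emeasure M (tile M \<sigma> C \<gamma>1 \<inter> tile M \<sigma> C \<gamma>2) = 0) \<and>
     emeasure M (space M - (\<Union>\<gamma>. tile M \<sigma> C \<gamma>)) = 0"

definition Pi_sigma :: "('g::group_add \<Rightarrow> 'x \<Rightarrow> 'x) \<Rightarrow> ('g \<Rightarrow> 'x \<Rightarrow> real) \<Rightarrow> 'g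
    \<Rightarrow> ('x \<Rightarrow> complex) \<Rightarrow> ('x \<Rightarrow> complex)" where
  "Pi_sigma \<sigma> J \<gamma> \<phi> = (\<lambda>x. complex_of_real (sqrt (J (-\<gamma>) x)) * \<phi> (\<sigma> (-\<gamma>) x))"

text \<open>Zak transform: Z[phi](x) = \<Sum>_gamma (Pi(gamma) phi)(x) rho(gamma), as coefficient function.\<close>
definition zak :: "('g::group_add \<Rightarrow> 'x \<Rightarrow> 'x) \<Rightarrow> ('g \<Rightarrow> 'x \<Rightarrow> real) \<Rightarrow> ('x \<Rightarrow> complex)
    \<Rightarrow> 'x \<Rightarrow> ('g \<Rightarrow> complex)" where
  "zak \<sigma> J \<phi> = (\<lambda>x \<gamma>. Pi_sigma \<sigma> J \<gamma> \<phi> x)"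

definition helson_map :: "'x measure \<Rightarrow> ('g::group_add \<Rightarrow> ('x \<Rightarrow> complex) \<Rightarrow> ('x \<Rightarrow> complex))
    \<Rightarrow> 'y measure \<Rightarrow> (('x \<Rightarrow> complex) \<Rightarrow> 'y \<Rightarrow> ('g \<Rightarrow> complex)) \<Rightarrow> bool" where
  "helson_map M Rep N T \<longleftrightarrow>
     (\<forall>\<phi>. L2_fun M \<phi> \<longrightarrow> L2_vec N (T \<phi>) \<and>
        (\<integral>y. l2_norm2 (T \<phi> y) \<partial>N) = (\<integral>x. (cmod (\<phi> x))^2 \<partial>M) \<and>
        (\<forall>\<gamma>. AE y in N. T (Rep \<gamma> \<phi>) y = rho_adj_right (T \<phi> y) \<gamma>)) \<and>
     (\<forall>\<phi> \<psi> a b. L2_fun M \<phi> \<longrightarrow> L2_fun M \<psi> \<longrightarrow>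
        (AE y in N. T (\<lambda>x. a * \<phi> x + b * \<psi> x) y = (\<lambda>g. a * T \<phi> y g + b * T \<psi> y g)))"

definition is_bracket_map :: "'x measure \<Rightarrow> ('g::group_add \<Rightarrow> ('x \<Rightarrow> complex) \<Rightarrow> ('x \<Rightarrow> complex))
    \<Rightarrow> (('x \<Rightarrow> complex) \<Rightarrow> ('x \<Rightarrow> complex) \<Rightarrow> ('g \<Rightarrow> complex)) \<Rightarrow> bool" where
  "is_bracket_map M Rep B \<longleftrightarrow>
     (\<forall>\<phi> \<psi> \<gamma>. L2_fun M \<phi> \<longrightarrow> L2_fun M \<psi> \<longrightarrow>
        L2_inner M \<phi> (Rep \<gamma> \<psi>) = tau_rho (B \<phi> \<psi>) \<gamma>)"

end

theory Submission
  imports Defs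
begin

locale zk = sigma_finite_measure M for M :: "'x measure" +
  fixes \<sigma> :: "'g::{group_add,countable} \<Rightarrow> 'x \<Rightarrow> 'x" and J :: "'g \<Rightarrow> 'x \<Rightarrow> real" and C :: "'x set"
  assumes qi: "quasi_invariant_action M \<sigma> J" and ts: "tiling_set M \<sigma> C"
begin

lemma sig_meas[measurable]: "\<sigma> g \<in> M \<rightarrow>\<^sub>M M" using qi unfolding quasi_invariant_action_def by blast
lemma J_meas[measurable]: "J g \<in> borel_measurable M" using qi unfolding quasi_invariant_action_def by blast
lemma J_pos: "AE x in M. J g x > 0" using qi unfolding quasi_invariant_action_def by blast
lemma sig_add: "AE x in M. \<sigma> (a + b) x = \<sigma> a (\<sigma> b x)" using qi unfolding quasi_invariant_action_def by blast
lemma sig_0: "AE x in M. \<sigma> 0 x = x" using qi unfolding quasi_invariant_action_def by blast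
lemma C_sets[measurable]: "C \<in> sets M" using ts unfolding tiling_set_def by blast

lemma emeas_pre: "E \<in> sets M \<Longrightarrow> emeasure M (\<sigma> g -` E \<inter> space M) = (\<integral>\<^sup>+ x\<in>E. ennreal (J (-g) x) \<partial>M)"
  using qi unfolding quasi_invariant_action_def by (metis minus_minus)

lemma sig_inv: "AE x in M. \<sigma> (-g) (\<sigma> g x) = x"
  using sig_add[of "-g" g] sig_0 by eventually_elim simp

lemma sig_inv': "AE x in M. \<sigma> g (\<sigma> (-g) x) = x"
  using sig_add[of g "-g"] sig_0 by eventually_elim simp

lemma distr_eq: "distr M M (\<sigma> g) = density M (\<lambda>x. ennreal (J (-g) x))"
proof (rule measure_eqI)
  fix E assume "E \<in> sets (distr M M (\<sigma> g))"
  then have E: "E \<in> sets M" by simp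
  show "emeasure (distr M M (\<sigma> g)) E = emeasure (density M (\<lambda>x. ennreal (J (-g) x))) E"
    using E by (simp add: emeasure_distr emeasure_density emeas_pre)
qed simp

lemma K: assumes [measurable]: "f \<in> borel_measurable M"
  shows "(\<integral>\<^sup>+x. f (\<sigma> g x) \<partial>M) = (\<integral>\<^sup>+x. ennreal (J (-g) x) * f x \<partial>M)"
proof -
  have "(\<integral>\<^sup>+x. f (\<sigma> g x) \<partial>M) = (\<integral>\<^sup>+x. f x \<partial>distr M M (\<sigma> g))"
    by (simp add: nn_integral_distr)
  also have "\<dots> = (\<integral>\<^sup>+x. ennreal (J (-g) x) * f x \<partial>M)"
    by (simp add: distr_eq nn_integral_density)
  finally show ?thesis .
qed

lemma null_pre: assumes "N \<in> null_sets M" shows "\<sigma> g -` N \<inter> space M \<in> null_sets M"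
proof -
  have N: "N \<in> sets M" using assms by auto
  have "\<sigma> g -` N \<inter> space M \<in> sets M" using N by measurable
  moreover have "emeasure M (\<sigma> g -` N \<inter> space M) = 0"
    using N assms by (simp add: emeas_pre nn_integral_null_set)
  ultimately show ?thesis by auto
qed

lemma AE_sig: assumes "AE x in M. P x" shows "AE x in M. P (\<sigma> g x)"
proof -
  from assms obtain N where N: "{x\<in>space M. \<not> P x} \<subseteq> N" "N \<in> null_sets M" unfolding eventually_ae_filter by blast
  show ?thesis
  proof (rule AE_I')
    show "\<sigma> g -` N \<inter> space M \<in> null_sets M" using null_pre[OF N(2)] .
    show "{x \<in> space M. \<not> P (\<sigma> g x)} \<subseteq> \<sigma> g -` N \<inter> space M"
      using N(1) measurable_space[OF sig_meas] by auto
  qed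
qed

lemma ts_disj: "a \<noteq> b \<Longrightarrow> emeasure M (tile M \<sigma> C a \<inter> tile M \<sigma> C b) = 0"
  using ts unfolding tiling_set_def by blast
lemma ts_cover: "emeasure M (space M - (\<Union>g. tile M \<sigma> C g)) = 0"
  using ts unfolding tiling_set_def by blast

lemma tile_sets[measurable]: "tile M \<sigma> C g \<in> sets M"
  unfolding tile_def by (rule measurable_sets[OF sig_meas C_sets])

lemma TU: "AE y in M. \<exists>!g. \<sigma> g y \<in> C"
proof -
  have "AE y in M. \<forall>a b. a \<noteq> b \<longrightarrow> \<not> (y \<in> tile M \<sigma> C a \<and> y \<in> tile M \<sigma> C b)"
    unfolding AE_all_countable
  proof (intro allI)
    fix a b :: 'g
    show "AE y in M. a \<noteq> b \<longrightarrow> \<not> (y \<in> tile M \<sigma> C a \<and> y \<in> tile M \<sigma> C b)"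
    proof (cases "a = b")
      case False
      have "emeasure M (tile M \<sigma> C a \<inter> tile M \<sigma> C b) = 0"
        using False by (rule ts_disj)
      then have "tile M \<sigma> C a \<inter> tile M \<sigma> C b \<in> null_sets M" by auto
      then show ?thesis by (rule AE_I') blast
    qed simp
  qed
  moreover have "AE y in M. y \<in> (\<Union>g. tile M \<sigma> C g)"
  proof (rule AE_I')
    have "(\<Union>g. tile M \<sigma> C g) \<in> sets M"
      by (rule sets.countable_UN) (blast intro: tile_sets)
    then have "space M - (\<Union>g. tile M \<sigma> C g) \<in> sets M" by blast
    moreover have "emeasure M (space M - (\<Union>g. tile M \<sigma> C g)) = 0"
      by (rule ts_cover)
    ultimately show "space M - (\<Union>g. tile M \<sigma> C g) \<in> null_sets M" by blast
  qed blast
  ultimately show ?thesis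
  proof eventually_elim
    case (elim y)
    then obtain a where a: "y \<in> tile M \<sigma> C a" by auto
    show ?case
    proof (rule ex1I[of _ "-a"])
      show "\<sigma> (-a) y \<in> C" using a by (simp add: tile_def)
      fix b assume "\<sigma> b y \<in> C"
      then have "y \<in> tile M \<sigma> C (-b)" using a by (simp add: tile_def)
      with a elim(1) have "-b = a" by blast
      then show "b = -a" by (metis minus_minus)
    qed
  qed
qed

lemma sum_unique: fixes P :: "'g \<Rightarrow> bool" assumes "\<exists>!g. P g"
  shows "(\<integral>\<^sup>+g. (if P g then c else 0) \<partial>count_space UNIV) = c"
proof -
  obtain g0 where g0: "P g0" "\<And>g. P g \<Longrightarrow> g = g0" using assms by blast
  have "(\<lambda>g. (if P g then c else 0)) = (\<lambda>g. c * indicator {g0} g)"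
  proof
    fix g show "(if P g then c else 0) = c * indicator {g0} g"
    proof (cases "g = g0")
      case True then show ?thesis using g0(1) by simp
    next
      case False then have "\<not> P g" using g0(2) by blast
      then show ?thesis using False by simp
    qed
  qed
  moreover have "(\<integral>\<^sup>+g. c * indicator {g0} g \<partial>count_space UNIV) = c * emeasure (count_space UNIV) {g0}"
    by (rule nn_integral_cmult_indicator) simp
  ultimately show ?thesis by (simp add: emeasure_count_space)
qed

lemma meas_count: fixes f :: "'g \<Rightarrow> 'y \<Rightarrow> ennreal"
  assumes "\<And>g. f g \<in> borel_measurable N"
  shows "(\<lambda>x. \<integral>\<^sup>+g. f g x \<partial>count_space UNIV) \<in> borel_measurable N"
proof -
  interpret c: sigma_finite_measure "count_space (UNIV::'g set)"
    by (rule sigma_finite_measure_count_space_countable) simp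
  have "(\<lambda>p. f (snd p) (fst p)) \<in> borel_measurable (N \<Otimes>\<^sub>M count_space UNIV)"
    by (rule measurable_compose_countable[where g=snd]) (rule measurable_compose[OF measurable_fst assms], simp)
  then show ?thesis by (intro c.borel_measurable_nn_integral) (simp add: case_prod_beta)

qed

lemma C_int[simp]: "C \<inter> space M \<in> sets M" using C_sets by blast

lemma GEN: assumes H[measurable]: "H \<in> borel_measurable M"
  shows "(\<integral>\<^sup>+y. H y \<partial>M) =
    (\<integral>\<^sup>+x. (\<integral>\<^sup>+g. ennreal (J (-g) x) * H (\<sigma> (-g) x) \<partial>count_space UNIV) \<partial>restrict_space M C)"
proof -
  have "(\<integral>\<^sup>+x. (\<integral>\<^sup>+g. ennreal (J (-g) x) * H (\<sigma> (-g) x) \<partial>count_space UNIV) \<partial>restrict_space M C)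
     = (\<integral>\<^sup>+x. (\<integral>\<^sup>+g. ennreal (J (-g) x) * H (\<sigma> (-g) x) \<partial>count_space UNIV) * indicator C x \<partial>M)"
    by (rule nn_integral_restrict_space) simp
  also have "\<dots> = (\<integral>\<^sup>+x. (\<integral>\<^sup>+g. ennreal (J (-g) x) * (indicator C x * H (\<sigma> (-g) x)) \<partial>count_space UNIV) \<partial>M)"
  proof (rule nn_integral_cong)
    fix x
    have "(\<integral>\<^sup>+g. ennreal (J (-g) x) * H (\<sigma> (-g) x) \<partial>count_space UNIV) * indicator C x
      = (\<integral>\<^sup>+g. ennreal (J (-g) x) * H (\<sigma> (-g) x) * indicator C x \<partial>count_space UNIV)"
      by (rule nn_integral_multc[symmetric]) simp
    then show "(\<integral>\<^sup>+g. ennreal (J (-g) x) * H (\<sigma> (-g) x) \<partial>count_space UNIV) * indicator C x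
      = (\<integral>\<^sup>+g. ennreal (J (-g) x) * (indicator C x * H (\<sigma> (-g) x)) \<partial>count_space UNIV)"
      by (simp add: mult_ac)
  qed
  also have "\<dots> = (\<integral>\<^sup>+g. (\<integral>\<^sup>+x. ennreal (J (-g) x) * (indicator C x * H (\<sigma> (-g) x)) \<partial>M) \<partial>count_space UNIV)"
    by (rule nn_integral_count_space_nn_integral) auto
  also have "\<dots> = (\<integral>\<^sup>+g. (\<integral>\<^sup>+y. indicator C (\<sigma> g y) * H y \<partial>M) \<partial>count_space UNIV)"
  proof (rule nn_integral_cong)
    fix g :: 'g
    have "(\<integral>\<^sup>+x. ennreal (J (-g) x) * (indicator C x * H (\<sigma> (-g) x)) \<partial>M)
        = (\<integral>\<^sup>+y. indicator C (\<sigma> g y) * H (\<sigma> (-g) (\<sigma> g y)) \<partial>M)"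
      by (rule K[symmetric]) simp
    also have "\<dots> = (\<integral>\<^sup>+y. indicator C (\<sigma> g y) * H y \<partial>M)"
      by (rule nn_integral_cong_AE) (use sig_inv[of g] in eventually_elim, simp)
    finally show "(\<integral>\<^sup>+x. ennreal (J (-g) x) * (indicator C x * H (\<sigma> (-g) x)) \<partial>M)
        = (\<integral>\<^sup>+y. indicator C (\<sigma> g y) * H y \<partial>M)" .
  qed
  also have "\<dots> = (\<integral>\<^sup>+y. (\<integral>\<^sup>+g. indicator C (\<sigma> g y) * H y \<partial>count_space UNIV) \<partial>M)"
    by (rule nn_integral_count_space_nn_integral[symmetric]) auto
  also have "\<dots> = (\<integral>\<^sup>+y. H y \<partial>M)"
  proof (rule nn_integral_cong_AE)
    show "AE y in M. (\<integral>\<^sup>+g. indicator C (\<sigma> g y) * H y \<partial>count_space UNIV) = H y"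
      using TU
    proof eventually_elim
      case (elim y)
      have "(\<lambda>g. indicator C (\<sigma> g y) * H y) = (\<lambda>g. if \<sigma> g y \<in> C then H y else 0)"
        by (auto simp: fun_eq_iff)
      then show ?case using sum_unique[OF elim] by simp
    qed
  qed
  finally show ?thesis ..
qed

lemma COC: "AE x in M. J (-(a+b)) x = J (-a) x * J (-b) (\<sigma> (-a) x)"
proof -
  have dens: "density M (\<lambda>x. ennreal (J (-(a+b)) x)) = density M (\<lambda>x. ennreal (J (-a) x) * ennreal (J (-b) (\<sigma> (-a) x)))"
  proof (rule measure_eqI)
    fix E assume "E \<in> sets (density M (\<lambda>x. ennreal (J (-(a+b)) x)))"
    then have E[measurable]: "E \<in> sets M" by simp
    have "emeasure (density M (\<lambda>x. ennreal (J (-(a+b)) x))) E = (\<integral>\<^sup>+x. ennreal (J (-(a+b)) x) * indicator E x \<partial>M)"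
      by (simp add: emeasure_density)
    also have "\<dots> = (\<integral>\<^sup>+x. indicator E (\<sigma> (a+b) x) \<partial>M)"
      by (rule K[symmetric]) simp
    also have "\<dots> = (\<integral>\<^sup>+x. indicator E (\<sigma> a (\<sigma> b x)) \<partial>M)"
      by (rule nn_integral_cong_AE) (use sig_add[of a b] in eventually_elim, simp)
    also have "\<dots> = (\<integral>\<^sup>+x. ennreal (J (-b) x) * indicator E (\<sigma> a x) \<partial>M)"
      by (rule K[of "\<lambda>y. indicator E (\<sigma> a y)"]) simp
    also have "\<dots> = (\<integral>\<^sup>+x. ennreal (J (-b) (\<sigma> (-a) (\<sigma> a x))) * indicator E (\<sigma> a x) \<partial>M)"
      by (rule nn_integral_cong_AE) (use sig_inv[of a] in eventually_elim, simp)
    also have "\<dots> = (\<integral>\<^sup>+y. ennreal (J (-a) y) * (ennreal (J (-b) (\<sigma> (-a) y)) * indicator E y) \<partial>M)"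
      by (rule K[of "\<lambda>y. ennreal (J (-b) (\<sigma> (-a) y)) * indicator E y"]) simp
    also have "\<dots> = emeasure (density M (\<lambda>x. ennreal (J (-a) x) * ennreal (J (-b) (\<sigma> (-a) x)))) E"
      by (simp add: emeasure_density mult_ac)
    finally show "emeasure (density M (\<lambda>x. ennreal (J (-(a+b)) x))) E = emeasure (density M (\<lambda>x. ennreal (J (-a) x) * ennreal (J (-b) (\<sigma> (-a) x)))) E" .
  qed simp
  have "AE x in M. ennreal (J (-(a+b)) x) = ennreal (J (-a) x) * ennreal (J (-b) (\<sigma> (-a) x))"
    by (rule density_unique[OF _ _ dens]) simp_all
  moreover have "AE x in M. J (-(a+b)) x > 0" by (rule J_pos)
  moreover have "AE x in M. J (-a) x > 0" by (rule J_pos)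
  moreover have "AE x in M. J (-b) (\<sigma> (-a) x) > 0" by (rule AE_sig) (rule J_pos)
  ultimately show ?thesis
  proof eventually_elim
    case (elim x)
    then have "ennreal (J (-(a+b)) x) = ennreal (J (-a) x * J (-b) (\<sigma> (-a) x))"
      by (simp add: ennreal_mult)
    then show ?case using elim by (subst (asm) ennreal_inj) auto
  qed
qed

lemma summ_int: fixes f :: "'a \<Rightarrow> 'b::{banach,second_countable_topology}"
  shows "(\<lambda>x. norm (f x)) summable_on A \<longleftrightarrow> integrable (count_space A) f"
  using abs_summable_equivalent[of f A] unfolding Infinite_Set_Sum.abs_summable_on_def .

lemma int_infsum: fixes f :: "'a \<Rightarrow> 'b::{banach,second_countable_topology}"
  assumes "integrable (count_space A) f" shows "integral\<^sup>L (count_space A) f = infsum f A"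
  using infsetsum_infsum[of f A] assms unfolding Infinite_Set_Sum.abs_summable_on_def infsetsum_def by simp

lemma INF: fixes f :: "'g \<Rightarrow> real" assumes nn: "\<And>g. f g \<ge> 0"
  shows "infsum f UNIV = enn2real (\<integral>\<^sup>+g. ennreal (f g) \<partial>count_space UNIV)"
    and "f summable_on UNIV \<longleftrightarrow> (\<integral>\<^sup>+g. ennreal (f g) \<partial>count_space UNIV) < \<infinity>"
proof -
  have nf: "(\<lambda>x. norm (f x)) = f" using nn by (simp add: fun_eq_iff)
  have iff: "f summable_on UNIV \<longleftrightarrow> integrable (count_space UNIV) f"
    using summ_int[of f UNIV] unfolding nf .
  have iff2: "integrable (count_space UNIV) f \<longleftrightarrow> (\<integral>\<^sup>+g. ennreal (f g) \<partial>count_space UNIV) < \<infinity>"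
    unfolding integrable_iff_bounded using nn by simp
  show "f summable_on UNIV \<longleftrightarrow> (\<integral>\<^sup>+g. ennreal (f g) \<partial>count_space UNIV) < \<infinity>"
    using iff iff2 by simp
  show "infsum f UNIV = enn2real (\<integral>\<^sup>+g. ennreal (f g) \<partial>count_space UNIV)"
  proof (cases "integrable (count_space UNIV) f")
    case True
    then have "infsum f UNIV = integral\<^sup>L (count_space UNIV) f" by (simp add: int_infsum)
    also have "\<dots> = enn2real (\<integral>\<^sup>+g. ennreal (f g) \<partial>count_space UNIV)"
      by (rule integral_eq_nn_integral) (use nn in auto)
    finally show ?thesis .
  next
    case False
    then have "\<not> f summable_on UNIV" using iff by simp
    then have "infsum f UNIV = 0" by (simp add: infsum_not_exists)
    moreover have "(\<integral>\<^sup>+g. ennreal (f g) \<partial>count_space UNIV) = \<infinity>" using False iff2 by (simp add: less_top[symmetric])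
    ultimately show ?thesis by simp
  qed
qed

lemma MINF: fixes h :: "'y \<Rightarrow> 'g \<Rightarrow> complex"
  assumes hm: "\<And>g. (\<lambda>x. h x g) \<in> borel_measurable N"
  shows "(\<lambda>x. infsum (h x) UNIV) \<in> borel_measurable N"
proof -
  interpret c: sigma_finite_measure "count_space (UNIV::'g set)"
    by (rule sigma_finite_measure_count_space_countable) simp
  have eq: "infsum (h x) UNIV = (if (\<integral>\<^sup>+g. ennreal (norm (h x g)) \<partial>count_space UNIV) < \<infinity>
     then integral\<^sup>L (count_space UNIV) (h x) else 0)" for x
  proof -
    have iff2: "integrable (count_space UNIV) (h x) \<longleftrightarrow> (\<integral>\<^sup>+g. ennreal (norm (h x g)) \<partial>count_space UNIV) < \<infinity>"
      unfolding integrable_iff_bounded by simp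
    show ?thesis
    proof (cases "integrable (count_space UNIV) (h x)")
      case True then show ?thesis using iff2 by (simp add: int_infsum)
    next
      case False
      then have "\<not> (\<lambda>g. norm (h x g)) summable_on UNIV" using summ_int[of "h x" UNIV] by simp
      then have "\<not> h x summable_on UNIV" using summable_on_iff_abs_summable_on_complex by blast
      then show ?thesis using False iff2 by (simp add: infsum_not_exists)
    qed
  qed
  have m1[measurable]: "(\<lambda>x. \<integral>\<^sup>+g. ennreal (norm (h x g)) \<partial>count_space UNIV) \<in> borel_measurable N"
    by (rule meas_count) (use hm in measurable)
  have "(\<lambda>p. h (fst p) (snd p)) \<in> borel_measurable (N \<Otimes>\<^sub>M count_space UNIV)"
    by (rule measurable_compose_countable[where f="\<lambda>g p. h (fst p) g" and g=snd])
       (rule measurable_compose[OF measurable_fst hm], simp)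
  then have m2[measurable]: "(\<lambda>x. integral\<^sup>L (count_space UNIV) (h x)) \<in> borel_measurable N"
    by (intro c.borel_measurable_lebesgue_integral) (simp add: case_prod_beta)
  show ?thesis unfolding eq by measurable
qed

abbreviation "N \<equiv> restrict_space M C"

lemma AE_N: "AE x in M. P x \<Longrightarrow> AE x in N. P x"
  by (subst AE_restrict_space_iff) (auto elim: AE_mp)

lemma meas_N: "f \<in> borel_measurable M \<Longrightarrow> f \<in> borel_measurable N"
  by (rule measurable_restrict_space1)

lemma zak_meas[measurable]: assumes [measurable]: "\<phi> \<in> borel_measurable M" shows "(\<lambda>x. zak \<sigma> J \<phi> x g) \<in> borel_measurable M"
  unfolding zak_def Pi_sigma_def by measurable

lemma zak_sq: "J (-g) x > 0 \<Longrightarrow> (cmod (zak \<sigma> J \<phi> x g))^2 = J (-g) x * (cmod (\<phi> (\<sigma> (-g) x)))^2"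
  unfolding zak_def Pi_sigma_def by (simp add: norm_mult power_mult_distrib)

lemma ZN: assumes [measurable]: "\<phi> \<in> borel_measurable M"
  shows "(\<integral>\<^sup>+x. (\<integral>\<^sup>+g. ennreal ((cmod (zak \<sigma> J \<phi> x g))^2) \<partial>count_space UNIV) \<partial>N)
     = (\<integral>\<^sup>+y. ennreal ((cmod (\<phi> y))^2) \<partial>M)"
proof -
  have "(\<integral>\<^sup>+y. ennreal ((cmod (\<phi> y))^2) \<partial>M) = (\<integral>\<^sup>+x. (\<integral>\<^sup>+g. ennreal (J (-g) x) * ennreal ((cmod (\<phi> (\<sigma> (-g) x)))^2) \<partial>count_space UNIV) \<partial>N)"
    by (rule GEN) measurable
  also have "\<dots> = (\<integral>\<^sup>+x. (\<integral>\<^sup>+g. ennreal ((cmod (zak \<sigma> J \<phi> x g))^2) \<partial>count_space UNIV) \<partial>N)"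
  proof (rule nn_integral_cong_AE, rule AE_N)
    have "AE x in M. \<forall>g. J (-g) x > 0" unfolding AE_all_countable by (intro allI J_pos)
    then show "AE x in M. (\<integral>\<^sup>+g. ennreal (J (-g) x) * ennreal ((cmod (\<phi> (\<sigma> (-g) x)))^2) \<partial>count_space UNIV)
       = (\<integral>\<^sup>+g. ennreal ((cmod (zak \<sigma> J \<phi> x g))^2) \<partial>count_space UNIV)"
    proof eventually_elim
      case (elim x)
      show ?case
      proof (rule nn_integral_cong)
        fix g
        have "J (-g) x > 0" using elim by blast
        then show "ennreal (J (-g) x) * ennreal ((cmod (\<phi> (\<sigma> (-g) x)))^2) = ennreal ((cmod (zak \<sigma> J \<phi> x g))^2)"
          by (simp add: zak_sq ennreal_mult)
      qed
    qed
  qed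
  finally show ?thesis ..
qed

lemma L2_zak: assumes "L2_fun M \<phi>"
  shows "L2_vec N (zak \<sigma> J \<phi>)" and "(\<integral>x. l2_norm2 (zak \<sigma> J \<phi> x) \<partial>N) = (\<integral>x. (cmod (\<phi> x))^2 \<partial>M)"
proof -
  have pm[measurable]: "\<phi> \<in> borel_measurable M" and pi: "integrable M (\<lambda>x. (cmod (\<phi> x))^2)"
    using assms unfolding L2_fun_def by auto
  define S where "S x = (\<integral>\<^sup>+g. ennreal ((cmod (zak \<sigma> J \<phi> x g))^2) \<partial>count_space UNIV)" for x
  have Sm[measurable]: "S \<in> borel_measurable N"
    unfolding S_def by (rule meas_count, rule meas_N) measurable
  have fin: "(\<integral>\<^sup>+y. ennreal ((cmod (\<phi> y))^2) \<partial>M) < \<infinity>"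
    using pi unfolding integrable_iff_bounded by simp
  have SI: "(\<integral>\<^sup>+x. S x \<partial>N) = (\<integral>\<^sup>+y. ennreal ((cmod (\<phi> y))^2) \<partial>M)"
    unfolding S_def by (rule ZN) simp
  have Sfin: "AE x in N. S x \<noteq> \<infinity>"
    by (rule nn_integral_PInf_AE) (use SI fin in auto)
  have l2: "l2_norm2 (zak \<sigma> J \<phi> x) = enn2real (S x)" for x
    unfolding l2_norm2_def S_def by (rule INF) simp
  have SI2: "(\<integral>\<^sup>+x. ennreal (enn2real (S x)) \<partial>N) = (\<integral>\<^sup>+x. S x \<partial>N)"
    by (rule nn_integral_cong_AE) (use Sfin in eventually_elim, simp add: ennreal_enn2real less_top[symmetric])
  have int: "integrable N (\<lambda>x. l2_norm2 (zak \<sigma> J \<phi> x))"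
    unfolding l2 integrable_iff_bounded using SI2 SI fin by simp
  have inl2: "AE x in N. in_l2 (zak \<sigma> J \<phi> x)"
    using Sfin by eventually_elim (simp add: in_l2_def INF(2) S_def[symmetric] less_top[symmetric])
  show "L2_vec N (zak \<sigma> J \<phi>)"
    unfolding L2_vec_def using int inl2 by (auto intro: meas_N)
  have "(\<integral>x. l2_norm2 (zak \<sigma> J \<phi> x) \<partial>N) = enn2real (\<integral>\<^sup>+x. ennreal (enn2real (S x)) \<partial>N)"
    unfolding l2 by (rule integral_eq_nn_integral) auto
  also have "\<dots> = enn2real (\<integral>\<^sup>+y. ennreal ((cmod (\<phi> y))^2) \<partial>M)" using SI2 SI by simp
  also have "\<dots> = (\<integral>x. (cmod (\<phi> x))^2 \<partial>M)"
    by (rule integral_eq_nn_integral[symmetric]) auto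
  finally show "(\<integral>x. l2_norm2 (zak \<sigma> J \<phi> x) \<partial>N) = (\<integral>x. (cmod (\<phi> x))^2 \<partial>M)" .
qed

lemma INTW: "AE y in N. zak \<sigma> J (Pi_sigma \<sigma> J \<gamma> \<phi>) y = rho_adj_right (zak \<sigma> J \<phi> y) \<gamma>"
proof (rule AE_N)
  have "AE x in M. \<forall>\<zeta>. J (-(\<zeta>+\<gamma>)) x = J (-\<zeta>) x * J (-\<gamma>) (\<sigma> (-\<zeta>) x)"
    unfolding AE_all_countable by (intro allI COC)
  moreover have "AE x in M. \<forall>\<zeta>. \<sigma> (-\<gamma> + -\<zeta>) x = \<sigma> (-\<gamma>) (\<sigma> (-\<zeta>) x)"
    unfolding AE_all_countable by (intro allI sig_add)
  ultimately show "AE x in M. zak \<sigma> J (Pi_sigma \<sigma> J \<gamma> \<phi>) x = rho_adj_right (zak \<sigma> J \<phi> x) \<gamma>"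
  proof eventually_elim
    case (elim x)
    show ?case
    proof
      fix \<zeta>
      have "zak \<sigma> J (Pi_sigma \<sigma> J \<gamma> \<phi>) x \<zeta> = complex_of_real (sqrt (J (-\<zeta>) x)) *
          (complex_of_real (sqrt (J (-\<gamma>) (\<sigma> (-\<zeta>) x))) * \<phi> (\<sigma> (-\<gamma>) (\<sigma> (-\<zeta>) x)))"
        by (simp add: zak_def Pi_sigma_def)
      also have "\<dots> = complex_of_real (sqrt (J (-(\<zeta>+\<gamma>)) x)) * \<phi> (\<sigma> (-(\<zeta>+\<gamma>)) x)"
        using elim by (simp add: minus_add real_sqrt_mult)
      also have "\<dots> = rho_adj_right (zak \<sigma> J \<phi> x) \<gamma> \<zeta>"
        by (simp add: zak_def Pi_sigma_def rho_adj_right_def)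
      finally show "zak \<sigma> J (Pi_sigma \<sigma> J \<gamma> \<phi>) x \<zeta> = rho_adj_right (zak \<sigma> J \<phi> x) \<gamma> \<zeta>" .
    qed
  qed
qed

lemma LIN: "zak \<sigma> J (\<lambda>x. a * \<phi> x + b * \<psi> x) y = (\<lambda>g. a * zak \<sigma> J \<phi> y g + b * zak \<sigma> J \<psi> y g)"
  by (simp add: zak_def Pi_sigma_def fun_eq_iff algebra_simps)

lemma HELSON: "helson_map M (Pi_sigma \<sigma> J) N (zak \<sigma> J)"
  unfolding helson_map_def using L2_zak INTW LIN by auto

lemma SURJ: assumes FL: "L2_vec N F"
  shows "\<exists>\<phi>. L2_fun M \<phi> \<and> (AE x in N. zak \<sigma> J \<phi> x = F x)"
proof -
  define F' where "F' \<gamma> x = (if x \<in> C then F x \<gamma> else 0)" for \<gamma> x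
  have F'm[measurable]: "F' \<gamma> \<in> borel_measurable M" for \<gamma>
  proof -
    have "(\<lambda>x. F x \<gamma>) \<in> borel_measurable N" using FL unfolding L2_vec_def by blast
    then show ?thesis unfolding F'_def by (subst (asm) measurable_restrict_space_iff) auto
  qed
  define ch where "ch y = (from_nat (LEAST n. \<sigma> (from_nat n) y \<in> C) :: 'g)" for y
  define K where "K \<gamma> y = F' \<gamma> (\<sigma> \<gamma> y) / complex_of_real (sqrt (J (-\<gamma>) (\<sigma> \<gamma> y)))" for \<gamma> y
  define \<phi> where "\<phi> y = K (ch y) y" for y
  have Km: "K \<gamma> \<in> borel_measurable M" for \<gamma> unfolding K_def by measurable
  have chm: "ch \<in> measurable M (count_space UNIV)"
  proof -
    have "(\<lambda>y. LEAST n. \<sigma> (from_nat n) y \<in> C) \<in> measurable M (count_space UNIV)"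
      by measurable
    then show ?thesis unfolding ch_def by (rule measurable_compose) simp
  qed
  have \<phi>m[measurable]: "\<phi> \<in> borel_measurable M"
    unfolding \<phi>_def by (rule measurable_compose_countable[where f=K, OF Km chm])
  have AEeq: "AE x in N. zak \<sigma> J \<phi> x = F x"
  proof -
    have "AE x in M. \<forall>\<gamma>. \<sigma> \<gamma> (\<sigma> (-\<gamma>) x) = x" unfolding AE_all_countable by (intro allI sig_inv')
    moreover have "AE x in M. \<forall>\<gamma>. \<exists>!\<delta>. \<sigma> \<delta> (\<sigma> (-\<gamma>) x) \<in> C"
      unfolding AE_all_countable by (intro allI AE_sig TU)
    moreover have "AE x in M. \<forall>\<gamma>. J (-\<gamma>) x > 0" unfolding AE_all_countable by (intro allI J_pos)
    ultimately have "AE x in M. x \<in> C \<longrightarrow> zak \<sigma> J \<phi> x = F x"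
    proof eventually_elim
      case (elim x)
      show ?case
      proof
        assume xC: "x \<in> C"
        show "zak \<sigma> J \<phi> x = F x"
        proof
          fix \<gamma>
          define y where "y = \<sigma> (-\<gamma>) x"
          have sy: "\<sigma> \<gamma> y = x" using elim(1) unfolding y_def by blast
          have ex1: "\<exists>!\<delta>. \<sigma> \<delta> y \<in> C" unfolding y_def using spec[OF elim(2), of \<gamma>] .
          have sgC: "\<sigma> \<gamma> y \<in> C" using sy xC by simp
          have uq: "\<delta> = \<gamma>" if "\<sigma> \<delta> y \<in> C" for \<delta>
            using ex1 sgC that by (elim ex1E) (metis)
          have P0: "\<sigma> (from_nat (to_nat \<gamma>)) y \<in> C" using sy xC by simp
          have "\<sigma> (from_nat (LEAST n. \<sigma> (from_nat n) y \<in> C)) y \<in> C"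
            by (rule LeastI[of "\<lambda>n. \<sigma> (from_nat n) y \<in> C", OF P0])
          then have chy: "ch y = \<gamma>" unfolding ch_def by (rule uq)
          have Jp: "J (-\<gamma>) x > 0" using elim(3) by blast
          have py: "\<phi> y = F x \<gamma> / complex_of_real (sqrt (J (-\<gamma>) x))"
            unfolding \<phi>_def chy K_def sy F'_def using xC by simp
          have nz: "complex_of_real (sqrt (J (-\<gamma>) x)) \<noteq> 0" using Jp by simp
          have "zak \<sigma> J \<phi> x \<gamma> = complex_of_real (sqrt (J (-\<gamma>) x)) * \<phi> y"
            by (simp add: zak_def Pi_sigma_def y_def)
          also have "\<dots> = F x \<gamma>" unfolding py using nz by (simp only: times_divide_eq_right) (rule nonzero_mult_div_cancel_left)
          finally show "zak \<sigma> J \<phi> x \<gamma> = F x \<gamma>" .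
        qed
      qed
    qed
    then show ?thesis by (subst AE_restrict_space_iff) simp_all
  qed
  have l2nn: "l2_norm2 c \<ge> 0" for c :: "'g \<Rightarrow> complex"
    unfolding l2_norm2_def by (rule infsum_nonneg) simp
  have "(\<integral>\<^sup>+y. ennreal ((cmod (\<phi> y))^2) \<partial>M)
     = (\<integral>\<^sup>+x. (\<integral>\<^sup>+g. ennreal ((cmod (zak \<sigma> J \<phi> x g))^2) \<partial>count_space UNIV) \<partial>N)"
    by (rule ZN[symmetric]) simp
  also have "\<dots> = (\<integral>\<^sup>+x. ennreal (l2_norm2 (F x)) \<partial>N)"
  proof (rule nn_integral_cong_AE)
    have "AE x in N. in_l2 (F x)" using FL unfolding L2_vec_def by blast
    with AEeq show "AE x in N. (\<integral>\<^sup>+g. ennreal ((cmod (zak \<sigma> J \<phi> x g))^2) \<partial>count_space UNIV) = ennreal (l2_norm2 (F x))"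
    proof eventually_elim
      case (elim x)
      have "(\<integral>\<^sup>+g. ennreal ((cmod (F x g))^2) \<partial>count_space UNIV) < \<infinity>"
        using elim(2) unfolding in_l2_def by (subst (asm) INF(2)) simp_all
      moreover have "l2_norm2 (F x) = enn2real (\<integral>\<^sup>+g. ennreal ((cmod (F x g))^2) \<partial>count_space UNIV)"
        unfolding l2_norm2_def by (rule INF(1)) simp
      ultimately show ?case using elim(1) by (simp add: ennreal_enn2real less_top[symmetric])
    qed
  qed
  also have "\<dots> < \<infinity>"
  proof -
    have "integrable N (\<lambda>x. l2_norm2 (F x))" using FL unfolding L2_vec_def by blast
    then show ?thesis unfolding integrable_iff_bounded using l2nn by simp
  qed
  finally have "(\<integral>\<^sup>+y. ennreal ((cmod (\<phi> y))^2) \<partial>M) < \<infinity>" .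
  then have "integrable M (\<lambda>x. (cmod (\<phi> x))^2)"
    unfolding integrable_iff_bounded by simp
  then show ?thesis using AEeq \<phi>m unfolding L2_fun_def by blast
qed

lemma sig_meas_Q[measurable]: "(\<lambda>p. \<sigma> (-(snd p)) (fst p)) \<in> measurable (N \<Otimes>\<^sub>M count_space UNIV) M"
  by (rule measurable_compose_countable[where f="\<lambda>g p. \<sigma> (-g) (fst p)" and g=snd])
     (rule measurable_compose[OF measurable_fst measurable_restrict_space1[OF sig_meas]], simp)

lemma J_meas_Q[measurable]: "(\<lambda>p. max 0 (J (-(snd p)) (fst p))) \<in> borel_measurable (N \<Otimes>\<^sub>M count_space UNIV)"
proof (rule measurable_compose_countable[where f="\<lambda>g p. max 0 (J (-g) (fst p))" and g=snd])
  fix g :: 'g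
  have "(\<lambda>x. max 0 (J (-g) x)) \<in> borel_measurable N" by (rule meas_N) measurable
  then show "(\<lambda>p. max 0 (J (-g) (fst p))) \<in> borel_measurable (N \<Otimes>\<^sub>M count_space UNIV)"
    by (rule measurable_compose[OF measurable_fst])
qed simp

lemma Q_psf: "pair_sigma_finite N (count_space (UNIV::'g set))"
  by (intro pair_sigma_finite.intro sigma_finite_measure_restrict_space sigma_finite_measure_count_space_countable)
     (simp_all add: sigma_finite_measure_axioms)

lemma Dq: "distr (density (N \<Otimes>\<^sub>M count_space UNIV) (\<lambda>p. ennreal (max 0 (J (-(snd p)) (fst p))))) M
    (\<lambda>p. \<sigma> (-(snd p)) (fst p)) = M" (is "distr ?D M ?\<Phi> = M")
proof (rule measure_eqI)
  interpret Q: pair_sigma_finite N "count_space (UNIV::'g set)" by (rule Q_psf)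
  fix E assume "E \<in> sets (distr ?D M ?\<Phi>)"
  then have E[measurable]: "E \<in> sets M" by simp
  have "emeasure (distr ?D M ?\<Phi>) E = emeasure ?D (?\<Phi> -` E \<inter> space ?D)"
    by (rule emeasure_distr) simp_all
  also have "\<dots> = (\<integral>\<^sup>+p. ennreal (max 0 (J (-(snd p)) (fst p))) * indicator (?\<Phi> -` E \<inter> space ?D) p \<partial>(N \<Otimes>\<^sub>M count_space UNIV))"
  proof (rule emeasure_density)
    show "(\<lambda>p. ennreal (max 0 (J (-(snd p)) (fst p)))) \<in> borel_measurable (N \<Otimes>\<^sub>M count_space UNIV)"
      by measurable
    have "?\<Phi> -` E \<inter> space (N \<Otimes>\<^sub>M count_space UNIV) \<in> sets (N \<Otimes>\<^sub>M count_space UNIV)"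
      by (rule measurable_sets[OF sig_meas_Q E])
    then show "?\<Phi> -` E \<inter> space ?D \<in> sets (N \<Otimes>\<^sub>M count_space UNIV)" by simp
  qed
  also have "\<dots> = (\<integral>\<^sup>+p. ennreal (max 0 (J (-(snd p)) (fst p))) * indicator E (?\<Phi> p) \<partial>(N \<Otimes>\<^sub>M count_space UNIV))"
    by (rule nn_integral_cong) (simp add: indicator_def)
  also have "\<dots> = (\<integral>\<^sup>+x. (\<integral>\<^sup>+g. ennreal (max 0 (J (-g) x)) * indicator E (\<sigma> (-g) x) \<partial>count_space UNIV) \<partial>N)"
  proof -
    have m: "(\<lambda>p. ennreal (max 0 (J (-(snd p)) (fst p))) * indicator E (\<sigma> (-(snd p)) (fst p))) \<in> borel_measurable (N \<Otimes>\<^sub>M count_space UNIV)"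
      by measurable
    show ?thesis using Q.M2.nn_integral_fst[OF m] by simp
  qed
  also have "\<dots> = (\<integral>\<^sup>+x. (\<integral>\<^sup>+g. ennreal (J (-g) x) * indicator E (\<sigma> (-g) x) \<partial>count_space UNIV) \<partial>N)"
    by (simp add: ennreal_max_0)
  also have "\<dots> = (\<integral>\<^sup>+y. indicator E y \<partial>M)"
    by (rule GEN[symmetric]) simp
  also have "\<dots> = emeasure M E" by simp
  finally show "emeasure (distr ?D M ?\<Phi>) E = emeasure M E" .
qed simp

lemma BOCH: fixes f :: "'x \<Rightarrow> complex" assumes fi: "integrable M f"
  shows "integrable (N \<Otimes>\<^sub>M count_space UNIV) (\<lambda>p. max 0 (J (-(snd p)) (fst p)) *\<^sub>R f (\<sigma> (-(snd p)) (fst p)))"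
    and "integral\<^sup>L M f = (\<integral>x. (\<integral>g. max 0 (J (-g) x) *\<^sub>R f (\<sigma> (-g) x) \<partial>count_space UNIV) \<partial>N)"
proof -
  interpret Q: pair_sigma_finite N "count_space (UNIV::'g set)" by (rule Q_psf)
  let ?Q = "N \<Otimes>\<^sub>M count_space (UNIV::'g set)"
  let ?g = "\<lambda>p. max 0 (J (-(snd p)) (fst p))"
  let ?\<Phi> = "\<lambda>p. \<sigma> (-(snd p)) (fst p)"
  have fm[measurable]: "f \<in> borel_measurable M" using fi by auto
  have "integrable (distr (density ?Q (\<lambda>p. ennreal (?g p))) M ?\<Phi>) f" unfolding Dq by (rule fi)
  then have "integrable (density ?Q (\<lambda>p. ennreal (?g p))) (\<lambda>p. f (?\<Phi> p))"
    by (subst (asm) integrable_distr_eq) simp_all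
  then show int: "integrable ?Q (\<lambda>p. ?g p *\<^sub>R f (?\<Phi> p))"
    by (subst (asm) integrable_density) simp_all
  have "integral\<^sup>L M f = integral\<^sup>L (distr (density ?Q (\<lambda>p. ennreal (?g p))) M ?\<Phi>) f" unfolding Dq ..
  also have "\<dots> = integral\<^sup>L (density ?Q (\<lambda>p. ennreal (?g p))) (\<lambda>p. f (?\<Phi> p))"
    by (rule integral_distr) simp_all
  also have "\<dots> = integral\<^sup>L ?Q (\<lambda>p. ?g p *\<^sub>R f (?\<Phi> p))"
    by (rule integral_density) simp_all
  also have "\<dots> = (\<integral>x. (\<integral>g. ?g (x,g) *\<^sub>R f (?\<Phi> (x,g)) \<partial>count_space UNIV) \<partial>N)"
    by (rule Q.integral_fst'[symmetric, OF int])
  finally show "integral\<^sup>L M f = (\<integral>x. (\<integral>g. max 0 (J (-g) x) *\<^sub>R f (\<sigma> (-g) x) \<partial>count_space UNIV) \<partial>N)"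
    by simp
qed

lemma ab_le: fixes a b :: real assumes "0 \<le> a" "0 \<le> b" shows "a * b \<le> a^2 + b^2"
proof -
  have "0 \<le> (a - b)^2" by simp
  moreover have "0 \<le> a * b" using assms by simp
  ultimately show ?thesis by (simp add: power2_eq_square algebra_simps)
qed

lemma cnj_meas[measurable]: "f \<in> borel_measurable P \<Longrightarrow> (\<lambda>x. cnj (f x :: complex)) \<in> borel_measurable P"
  by (rule borel_measurable_continuous_on[where f=cnj]) (auto intro: continuous_intros)

lemma PROD: assumes "L2_fun M \<phi>" "L2_fun M \<psi>" shows "integrable M (\<lambda>x. \<phi> x * cnj (\<psi> x))"
proof (rule Bochner_Integration.integrable_bound)
  have [measurable]: "\<phi> \<in> borel_measurable M" "\<psi> \<in> borel_measurable M" using assms unfolding L2_fun_def by auto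
  show "integrable M (\<lambda>x. (cmod (\<phi> x))^2 + (cmod (\<psi> x))^2)"
    using assms unfolding L2_fun_def by auto
  show "(\<lambda>x. \<phi> x * cnj (\<psi> x)) \<in> borel_measurable M" by measurable
  show "AE x in M. norm (\<phi> x * cnj (\<psi> x)) \<le> norm ((cmod (\<phi> x))^2 + (cmod (\<psi> x))^2)"
    by (intro AE_I2) (simp add: norm_mult ab_le)
qed

lemma PI_L2: assumes "L2_fun M \<psi>" shows "L2_fun M (Pi_sigma \<sigma> J \<gamma> \<psi>)"
proof -
  have [measurable]: "\<psi> \<in> borel_measurable M" and pi: "integrable M (\<lambda>x. (cmod (\<psi> x))^2)"
    using assms unfolding L2_fun_def by auto
  have pm[measurable]: "Pi_sigma \<sigma> J \<gamma> \<psi> \<in> borel_measurable M" unfolding Pi_sigma_def by measurable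
  have "(\<integral>\<^sup>+y. ennreal ((cmod (Pi_sigma \<sigma> J \<gamma> \<psi> y))^2) \<partial>M)
      = (\<integral>\<^sup>+y. ennreal (J (-\<gamma>) y) * ennreal ((cmod (\<psi> (\<sigma> (-\<gamma>) y)))^2) \<partial>M)"
  proof (rule nn_integral_cong_AE)
    show "AE y in M. ennreal ((cmod (Pi_sigma \<sigma> J \<gamma> \<psi> y))^2) = ennreal (J (-\<gamma>) y) * ennreal ((cmod (\<psi> (\<sigma> (-\<gamma>) y)))^2)"
      using J_pos[of "-\<gamma>"]
    proof eventually_elim
      case (elim y)
      have "(cmod (Pi_sigma \<sigma> J \<gamma> \<psi> y))^2 = J (-\<gamma>) y * (cmod (\<psi> (\<sigma> (-\<gamma>) y)))^2"
        using zak_sq[OF elim, of \<psi>] by (simp add: zak_def)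
      then show ?case using elim by (simp add: ennreal_mult)
    qed
  qed
  also have "\<dots> = (\<integral>\<^sup>+x. ennreal ((cmod (\<psi> (\<sigma> (-\<gamma>) (\<sigma> \<gamma> x))))^2) \<partial>M)"
    by (rule K[symmetric]) simp
  also have "\<dots> = (\<integral>\<^sup>+x. ennreal ((cmod (\<psi> x))^2) \<partial>M)"
    by (rule nn_integral_cong_AE) (use sig_inv[of \<gamma>] in eventually_elim, simp)
  also have "\<dots> < \<infinity>" using pi unfolding integrable_iff_bounded by simp
  finally show ?thesis unfolding L2_fun_def integrable_iff_bounded by simp
qed

lemma sq_id: fixes a :: real assumes "0 < a"
  shows "a *\<^sub>R (u * cnj v) = (complex_of_real (sqrt a) * u) * cnj (complex_of_real (sqrt a) * v)"
proof -
  have "complex_of_real (sqrt a) * complex_of_real (sqrt a) = complex_of_real a"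
    using assms by (simp flip: of_real_mult)
  then show ?thesis by (simp add: scaleR_conv_of_real)
qed

lemma bij_shift: "bij_betw (\<lambda>\<eta>::'g. \<eta> + -\<gamma>) UNIV UNIV"
  by (rule bij_betwI[where g="\<lambda>\<eta>. \<eta> + \<gamma>"]) (auto simp: add.assoc)

lemma BRACKET: assumes L1: "L2_fun M \<phi>" and L2: "L2_fun M \<psi>"
  shows "L2_inner M \<phi> (Pi_sigma \<sigma> J \<gamma> \<psi>) = (\<integral>x. nc_adj_mult (zak \<sigma> J \<psi> x) (zak \<sigma> J \<phi> x) (-\<gamma>) \<partial>N)"
proof -
  interpret Q: pair_sigma_finite N "count_space (UNIV::'g set)" by (rule Q_psf)
  have [measurable]: "\<phi> \<in> borel_measurable M" "\<psi> \<in> borel_measurable M" using L1 L2 unfolding L2_fun_def by auto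
  define f where "f y = \<phi> y * cnj (Pi_sigma \<sigma> J \<gamma> \<psi> y)" for y
  have fi: "integrable M f" unfolding f_def by (rule PROD[OF L1 PI_L2[OF L2]])
  have "L2_inner M \<phi> (Pi_sigma \<sigma> J \<gamma> \<psi>) = integral\<^sup>L M f" unfolding L2_inner_def f_def ..
  also have "\<dots> = (\<integral>x. (\<integral>g. max 0 (J (-g) x) *\<^sub>R f (\<sigma> (-g) x) \<partial>count_space UNIV) \<partial>N)"
    by (rule BOCH(2)[OF fi])
  also have "\<dots> = (\<integral>x. nc_adj_mult (zak \<sigma> J \<psi> x) (zak \<sigma> J \<phi> x) (-\<gamma>) \<partial>N)"
  proof (rule integral_cong_AE)
    have "(\<lambda>p. max 0 (J (-(snd p)) (fst p)) *\<^sub>R f (\<sigma> (-(snd p)) (fst p))) \<in> borel_measurable (N \<Otimes>\<^sub>M count_space UNIV)"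
      using BOCH(1)[OF fi] by auto
    then show "(\<lambda>x. \<integral>g. max 0 (J (-g) x) *\<^sub>R f (\<sigma> (-g) x) \<partial>count_space UNIV) \<in> borel_measurable N"
      by (intro Q.M2.borel_measurable_lebesgue_integral) (simp add: case_prod_beta)
    show "(\<lambda>x. nc_adj_mult (zak \<sigma> J \<psi> x) (zak \<sigma> J \<phi> x) (-\<gamma>)) \<in> borel_measurable N"
      unfolding nc_adj_mult_def by (rule MINF, rule meas_N) measurable
    have AEi: "AE x in N. integrable (count_space UNIV) (\<lambda>g. max 0 (J (-g) x) *\<^sub>R f (\<sigma> (-g) x))"
      using Q.AE_integrable_fst'[OF BOCH(1)[OF fi]] by simp
    have AEp: "AE x in N. \<forall>g. J (-g) x > 0" by (rule AE_N) (unfold AE_all_countable, intro allI J_pos)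
    show "AE x in N. (\<integral>g. max 0 (J (-g) x) *\<^sub>R f (\<sigma> (-g) x) \<partial>count_space UNIV) = nc_adj_mult (zak \<sigma> J \<psi> x) (zak \<sigma> J \<phi> x) (-\<gamma>)"
      using AEi AEp INTW[of \<gamma> \<psi>]
    proof eventually_elim
      case (elim x)
      have "(\<integral>g. max 0 (J (-g) x) *\<^sub>R f (\<sigma> (-g) x) \<partial>count_space UNIV) = infsum (\<lambda>g. max 0 (J (-g) x) *\<^sub>R f (\<sigma> (-g) x)) UNIV"
        by (rule int_infsum[OF elim(1)])
      also have "\<dots> = infsum (\<lambda>g. zak \<sigma> J \<phi> x g * cnj (zak \<sigma> J \<psi> x (g + \<gamma>))) UNIV"
      proof (rule infsum_cong)
        fix g
        have Jg: "J (-g) x > 0" using elim(2) by blast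
        have W: "zak \<sigma> J (Pi_sigma \<sigma> J \<gamma> \<psi>) x g = zak \<sigma> J \<psi> x (g + \<gamma>)"
          using fun_cong[OF elim(3), of g] by (simp add: rho_adj_right_def)
        have "max 0 (J (-g) x) *\<^sub>R f (\<sigma> (-g) x) = J (-g) x *\<^sub>R f (\<sigma> (-g) x)" using Jg by simp
        also have "\<dots> = zak \<sigma> J \<phi> x g * cnj (zak \<sigma> J (Pi_sigma \<sigma> J \<gamma> \<psi>) x g)"
          unfolding f_def using sq_id[OF Jg] by (simp add: zak_def Pi_sigma_def[of \<sigma> J g])
        finally show "max 0 (J (-g) x) *\<^sub>R f (\<sigma> (-g) x) = zak \<sigma> J \<phi> x g * cnj (zak \<sigma> J \<psi> x (g + \<gamma>))"
          unfolding W .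
      qed
      also have "\<dots> = infsum (\<lambda>\<eta>. zak \<sigma> J \<phi> x (\<eta> + -\<gamma>) * cnj (zak \<sigma> J \<psi> x (\<eta> + -\<gamma> + \<gamma>))) UNIV"
        by (rule infsum_reindex_bij_betw[OF bij_shift, symmetric])
      also have "\<dots> = nc_adj_mult (zak \<sigma> J \<psi> x) (zak \<sigma> J \<phi> x) (-\<gamma>)"
        unfolding nc_adj_mult_def by (simp add: add.assoc mult.commute)
      finally show ?case .
    qed
  qed
  finally show ?thesis .
qed

end

theorem proposition7p1:
  fixes M :: "'x measure" and \<sigma> :: "'g::{group_add,countable} \<Rightarrow> 'x \<Rightarrow> 'x"
    and J :: "'g \<Rightarrow> 'x \<Rightarrow> real" and C :: "'x set"
  assumes "sigma_finite_measure M"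
    and "quasi_invariant_action M \<sigma> J"
    and "tiling_set M \<sigma> C"
  shows "helson_map M (Pi_sigma \<sigma> J) (restrict_space M C) (zak \<sigma> J)
    \<and> (\<forall>F. L2_vec (restrict_space M C) F \<longrightarrow>
          (\<exists>\<phi>. L2_fun M \<phi> \<and> (AE x in restrict_space M C. zak \<sigma> J \<phi> x = F x)))
    \<and> is_bracket_map M (Pi_sigma \<sigma> J)
        (\<lambda>\<phi> \<psi> \<alpha>. \<integral>x. nc_adj_mult (zak \<sigma> J \<psi> x) (zak \<sigma> J \<phi> x) \<alpha> \<partial>(restrict_space M C))"
proof -
  interpret zk M \<sigma> J C by (intro zk.intro zk_axioms.intro assms)
  show ?thesis using HELSON SURJ BRACKET unfolding is_bracket_map_def tau_rho_def by blast
qed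

end
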